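(* Let $\mathcal{G}\rightrightarrows M$ be a topological groupoid such that $M$ is Hausdorff. Then $$\{B\subset\mathcal{G}:\ \forall K\subset\mathcal{G}\text{ compact }\exists K'\subset\mathcal{G}\text{ compact with }KB\cup BK\subset K'\}$$ $$=\{B\subset\mathcal{G}:\ \forall K\subset M\text{ compact }\exists K'\subset\mathcal{G}\text{ compact with }(B\cap t^{-1}(K))\cup(B\cap s^{-1}(K))\subset K'\},$$ and this family $\mathcal{B}_\mathcal{G}$ is a base-bounded compatible bornology on $\mathcal{G}$ containing all compact subsets of $\mathcal{G}$.
   Context: A topological groupoid $\mathcal{G}\rightrightarrows M$ is a groupoid (arrows $\mathcal{G}$, objects $M$, target and source $t,s$, units $1_x$, inverses, multiplication $g_1g_2$ defined when $s(g_1)=t(g_2)$) with $\mathcal{G}$, $M$ topological spaces and all structure maps continuous (multiplication on the subspace of composable pairs of $\mathcal{G}\times\mathcal{G}$). For $A,B\subset\mathcal{G}$, $AB=\{ab:a\in A,b\in B,s(a)=t(b)\}$ and $B^{-1}=\{b^{-1}:b\in B\}$. A bornology on a set $X$ is a family $\mathcal{B}$ of subsets closed under taking subsets and finite unions with $\bigcup\mathcal{B}=X$. A bornology on $\mathcal{G}$ is compatible if $B^{-1}\in\mathcal{B}$ and $BB'\in\mathcal{B}$ for all $B,B'\in\mathcal{B}$, and base-bounded if $1_M=\{1_x:x\in M\}\in\mathcal{B}$. *)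

theory Defs
  imports "HOL-Analysis.Analysis"
begin

text \<open>A topological groupoid with arrow space TG (arrows = topspace TG) and
object space TM (objects = topspace TM); target tg, source sc, units un,
inverse iv, multiplication mul (mul g h defined when sc g = tg h).\<close>

definition composable_pairs ::
  "'g topology \<Rightarrow> ('g \<Rightarrow> 'm) \<Rightarrow> ('g \<Rightarrow> 'm) \<Rightarrow> ('g \<times> 'g) set" where
  "composable_pairs TG tg sc = {(g, h). g \<in> topspace TG \<and> h \<in> topspace TG \<and> sc g = tg h}"

definition topological_groupoid ::
  "'g topology \<Rightarrow> 'm topology \<Rightarrow> ('g \<Rightarrow> 'm) \<Rightarrow> ('g \<Rightarrow> 'm) \<Rightarrow> ('m \<Rightarrow> 'g)
   \<Rightarrow> ('g \<Rightarrow> 'g) \<Rightarrow> ('g \<Rightarrow> 'g \<Rightarrow> 'g) \<Rightarrow> bool" where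
  "topological_groupoid TG TM tg sc un iv mul \<longleftrightarrow>
     (\<forall>g\<in>topspace TG. tg g \<in> topspace TM \<and> sc g \<in> topspace TM) \<and>
     (\<forall>x\<in>topspace TM. un x \<in> topspace TG \<and> tg (un x) = x \<and> sc (un x) = x) \<and>
     (\<forall>g\<in>topspace TG. \<forall>h\<in>topspace TG. sc g = tg h \<longrightarrow>
         mul g h \<in> topspace TG \<and> tg (mul g h) = tg g \<and> sc (mul g h) = sc h) \<and>
     (\<forall>g\<in>topspace TG. \<forall>h\<in>topspace TG. \<forall>k\<in>topspace TG.
         sc g = tg h \<longrightarrow> sc h = tg k \<longrightarrow> mul (mul g h) k = mul g (mul h k)) \<and>
     (\<forall>g\<in>topspace TG. mul (un (tg g)) g = g \<and> mul g (un (sc g)) = g) \<and>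
     (\<forall>g\<in>topspace TG. iv g \<in> topspace TG \<and> tg (iv g) = sc g \<and> sc (iv g) = tg g \<and>
         mul g (iv g) = un (tg g) \<and> mul (iv g) g = un (sc g)) \<and>
     continuous_map TG TM tg \<and> continuous_map TG TM sc \<and>
     continuous_map TM TG un \<and> continuous_map TG TG iv \<and>
     continuous_map (subtopology (prod_topology TG TG) (composable_pairs TG tg sc)) TG
        (\<lambda>(g, h). mul g h)"

definition setmul :: "('g \<Rightarrow> 'm) \<Rightarrow> ('g \<Rightarrow> 'm) \<Rightarrow> ('g \<Rightarrow> 'g \<Rightarrow> 'g) \<Rightarrow> 'g set \<Rightarrow> 'g set \<Rightarrow> 'g set" where
  "setmul tg sc mul A B = {mul a b | a b. a \<in> A \<and> b \<in> B \<and> sc a = tg b}"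

definition bornology :: "'a set \<Rightarrow> 'a set set \<Rightarrow> bool" where
  "bornology X \<B> \<longleftrightarrow> \<B> \<subseteq> Pow X \<and>
     (\<forall>B\<in>\<B>. \<forall>C. C \<subseteq> B \<longrightarrow> C \<in> \<B>) \<and>
     {} \<in> \<B> \<and> (\<forall>B\<in>\<B>. \<forall>C\<in>\<B>. B \<union> C \<in> \<B>) \<and>
     \<Union>\<B> = X"

definition compatible_bornology ::
  "('g \<Rightarrow> 'm) \<Rightarrow> ('g \<Rightarrow> 'm) \<Rightarrow> ('g \<Rightarrow> 'g) \<Rightarrow> ('g \<Rightarrow> 'g \<Rightarrow> 'g) \<Rightarrow> 'g set set \<Rightarrow> bool" where
  "compatible_bornology tg sc iv mul \<B> \<longleftrightarrow>
     (\<forall>B\<in>\<B>. iv ` B \<in> \<B>) \<and> (\<forall>B\<in>\<B>. \<forall>C\<in>\<B>. setmul tg sc mul B C \<in> \<B>)"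

definition base_bounded :: "'m set \<Rightarrow> ('m \<Rightarrow> 'g) \<Rightarrow> 'g set set \<Rightarrow> bool" where
  "base_bounded M un \<B> \<longleftrightarrow> un ` M \<in> \<B>"

end

theory Submission
  imports Defs
begin

lemma setmul_compact:
  assumes G: "topological_groupoid TG TM tg sc un iv mul"
    and H: "Hausdorff_space TM"
    and K1: "compactin TG K1" and K2: "compactin TG K2"
  shows "compactin TG (setmul tg sc mul K1 K2)"
proof -
  have ctg: "continuous_map TG TM tg" and csc: "continuous_map TG TM sc"
    and cm: "continuous_map (subtopology (prod_topology TG TG) (composable_pairs TG tg sc)) TG
        (\<lambda>(g, h). mul g h)"
    using G unfolding topological_groupoid_def by auto
  have cp: "continuous_map (prod_topology TG TG) (prod_topology TM TM) (\<lambda>x. (sc (fst x), tg (snd x)))"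
    by (intro continuous_map_pairedI continuous_map_compose[OF continuous_map_fst csc, unfolded o_def]
        continuous_map_compose[OF continuous_map_snd ctg, unfolded o_def])
  have cl: "closedin (prod_topology TG TG) {x \<in> topspace (prod_topology TG TG). (sc (fst x), tg (snd x)) \<in> (\<lambda>x. (x,x)) ` topspace TM}"
    by (rule closedin_continuous_map_preimage[OF cp]) (use H Hausdorff_space_closedin_diagonal in blast)
  have eq: "{x \<in> topspace (prod_topology TG TG). (sc (fst x), tg (snd x)) \<in> (\<lambda>x. (x,x)) ` topspace TM}
      = composable_pairs TG tg sc"
    using G unfolding composable_pairs_def topological_groupoid_def by auto
  define C where "C = (K1 \<times> K2) \<inter> composable_pairs TG tg sc"
  have cK: "compactin (prod_topology TG TG) (K1 \<times> K2)"
    using K1 K2 compactin_Times by blast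
  have cC: "compactin (prod_topology TG TG) C"
    unfolding C_def
    using compact_Int_closedin[OF cK] cl eq by simp
  have "compactin (subtopology (prod_topology TG TG) (composable_pairs TG tg sc)) C"
    using cC by (simp add: compactin_subtopology C_def)
  then have "compactin TG ((\<lambda>(g, h). mul g h) ` C)"
    using image_compactin cm by blast
  moreover have "(\<lambda>(g, h). mul g h) ` C = setmul tg sc mul K1 K2"
    unfolding C_def setmul_def composable_pairs_def using K1 K2 compactin_subset_topspace
    by force
  ultimately show ?thesis by simp
qed

lemma setmul_mono:
  "A \<subseteq> A' \<Longrightarrow> B \<subseteq> B' \<Longrightarrow> setmul tg sc mul A B \<subseteq> setmul tg sc mul A' B'"
  unfolding setmul_def by blast

lemma setmul_assoc1:
  assumes G: "topological_groupoid TG TM tg sc un iv mul"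
    and "A \<subseteq> topspace TG" "B \<subseteq> topspace TG" "C \<subseteq> topspace TG"
  shows "setmul tg sc mul A (setmul tg sc mul B C) \<subseteq> setmul tg sc mul (setmul tg sc mul A B) C"
proof
  fix x assume "x \<in> setmul tg sc mul A (setmul tg sc mul B C)"
  then obtain a b c where x: "x = mul a (mul b c)" "a \<in> A" "b \<in> B" "c \<in> C"
    "sc b = tg c" "sc a = tg (mul b c)"
    unfolding setmul_def by blast
  have t: "a \<in> topspace TG" "b \<in> topspace TG" "c \<in> topspace TG" using x assms by auto
  have "tg (mul b c) = tg b" "sc (mul a b) = sc b" "mul (mul a b) c = mul a (mul b c)"
    using G t x unfolding topological_groupoid_def by auto
  moreover have "mul a b \<in> setmul tg sc mul A B" unfolding setmul_def using x calculation by auto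
  ultimately show "x \<in> setmul tg sc mul (setmul tg sc mul A B) C"
    unfolding setmul_def using x by (metis (mono_tags, lifting) mem_Collect_eq)
qed

lemma setmul_assoc2:
  assumes G: "topological_groupoid TG TM tg sc un iv mul"
    and "A \<subseteq> topspace TG" "B \<subseteq> topspace TG" "C \<subseteq> topspace TG"
  shows "setmul tg sc mul (setmul tg sc mul A B) C \<subseteq> setmul tg sc mul A (setmul tg sc mul B C)"
proof
  fix x assume "x \<in> setmul tg sc mul (setmul tg sc mul A B) C"
  then obtain a b c where x: "x = mul (mul a b) c" "a \<in> A" "b \<in> B" "c \<in> C"
    "sc a = tg b" "sc (mul a b) = tg c"
    unfolding setmul_def by blast
  have t: "a \<in> topspace TG" "b \<in> topspace TG" "c \<in> topspace TG" using x assms by auto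
  have "sc (mul a b) = sc b" "tg (mul b c) = tg b" "mul (mul a b) c = mul a (mul b c)"
    using G t x unfolding topological_groupoid_def by auto
  moreover have "mul b c \<in> setmul tg sc mul B C" unfolding setmul_def using x calculation by auto
  ultimately show "x \<in> setmul tg sc mul A (setmul tg sc mul B C)"
    unfolding setmul_def using x by (metis (mono_tags, lifting) mem_Collect_eq)
qed

theorem proposition7p5:
  fixes TG :: "'g topology" and TM :: "'m topology"
    and tg sc :: "'g \<Rightarrow> 'm" and un :: "'m \<Rightarrow> 'g" and iv :: "'g \<Rightarrow> 'g"
    and mul :: "'g \<Rightarrow> 'g \<Rightarrow> 'g"
  assumes "topological_groupoid TG TM tg sc un iv mul"
    and "Hausdorff_space TM"
  defines "BG \<equiv> {B. B \<subseteq> topspace TG \<and> (\<forall>K. compactin TG K \<longrightarrow>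
              (\<exists>K'. compactin TG K' \<and> setmul tg sc mul K B \<union> setmul tg sc mul B K \<subseteq> K'))}"
  shows "BG = {B. B \<subseteq> topspace TG \<and> (\<forall>K. compactin TM K \<longrightarrow>
              (\<exists>K'. compactin TG K' \<and> {g\<in>B. tg g \<in> K} \<union> {g\<in>B. sc g \<in> K} \<subseteq> K'))}
    \<and> bornology (topspace TG) BG
    \<and> compatible_bornology tg sc iv mul BG
    \<and> base_bounded (topspace TM) un BG
    \<and> (\<forall>K. compactin TG K \<longrightarrow> K \<in> BG)"
proof -
  note G = assms(1) and H = assms(2)
  have T: "\<forall>g\<in>topspace TG. tg g \<in> topspace TM \<and> sc g \<in> topspace TM"
    "\<forall>x\<in>topspace TM. un x \<in> topspace TG \<and> tg (un x) = x \<and> sc (un x) = x"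
    "\<forall>g\<in>topspace TG. mul (un (tg g)) g = g \<and> mul g (un (sc g)) = g"
    "\<forall>g\<in>topspace TG. iv g \<in> topspace TG \<and> tg (iv g) = sc g \<and> sc (iv g) = tg g"
    and ctg: "continuous_map TG TM tg" and csc: "continuous_map TG TM sc"
    and cun: "continuous_map TM TG un" and civ: "continuous_map TG TG iv"
    using G unfolding topological_groupoid_def by auto
  have sm: "\<And>K1 K2. compactin TG K1 \<Longrightarrow> compactin TG K2 \<Longrightarrow> compactin TG (setmul tg sc mul K1 K2)"
    using setmul_compact[OF G H] by blast
  define BG2 where "BG2 = {B. B \<subseteq> topspace TG \<and> (\<forall>K. compactin TM K \<longrightarrow>
              (\<exists>K'. compactin TG K' \<and> {g\<in>B. tg g \<in> K} \<union> {g\<in>B. sc g \<in> K} \<subseteq> K'))}"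
  have BGI: "B \<in> BG" if "B \<subseteq> topspace TG" "\<And>K. compactin TG K \<Longrightarrow>
              (\<exists>K'. compactin TG K' \<and> setmul tg sc mul K B \<union> setmul tg sc mul B K \<subseteq> K')" for B
    using that unfolding BG_def by blast
  have BGE: "\<exists>K'. compactin TG K' \<and> setmul tg sc mul K B \<union> setmul tg sc mul B K \<subseteq> K'"
    if "B \<in> BG" "compactin TG K" for B K
    using that unfolding BG_def by blast
  have BGs: "B \<subseteq> topspace TG" if "B \<in> BG" for B using that unfolding BG_def by blast
  have eq: "BG = BG2"
  proof
    show "BG \<subseteq> BG2"
    proof
      fix B assume B: "B \<in> BG"
      have Bt: "B \<subseteq> topspace TG" using BGs[OF B] .
      show "B \<in> BG2" unfolding BG2_def
      proof (intro CollectI conjI allI impI Bt)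
        fix K assume K: "compactin TM K"
        have uK: "compactin TG (un ` K)" using image_compactin[OF K cun] .
        obtain K' where K': "compactin TG K'"
          "setmul tg sc mul (un ` K) B \<union> setmul tg sc mul B (un ` K) \<subseteq> K'"
          using BGE[OF B uK] by blast
        have "{g\<in>B. tg g \<in> K} \<subseteq> setmul tg sc mul (un ` K) B"
        proof
          fix g assume g: "g \<in> {g\<in>B. tg g \<in> K}"
          then have gt: "g \<in> topspace TG" using Bt by auto
          then have "mul (un (tg g)) g = g" "sc (un (tg g)) = tg g" using T by auto
          then show "g \<in> setmul tg sc mul (un ` K) B" unfolding setmul_def using g by force
        qed
        moreover have "{g\<in>B. sc g \<in> K} \<subseteq> setmul tg sc mul B (un ` K)"
        proof
          fix g assume g: "g \<in> {g\<in>B. sc g \<in> K}"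
          then have gt: "g \<in> topspace TG" using Bt by auto
          then have "mul g (un (sc g)) = g" "tg (un (sc g)) = sc g" using T by auto
          then show "g \<in> setmul tg sc mul B (un ` K)" unfolding setmul_def using g by force
        qed
        ultimately show "\<exists>K'. compactin TG K' \<and> {g\<in>B. tg g \<in> K} \<union> {g\<in>B. sc g \<in> K} \<subseteq> K'"
          using K' by blast
      qed
    qed
  next
    show "BG2 \<subseteq> BG"
    proof
      fix B assume B: "B \<in> BG2"
      have Bt: "B \<subseteq> topspace TG" using B unfolding BG2_def by blast
      show "B \<in> BG"
      proof (rule BGI[OF Bt])
        fix K assume K: "compactin TG K"
        have Kt: "K \<subseteq> topspace TG" using K compactin_subset_topspace by blast
        obtain K1 where K1: "compactin TG K1" "{g\<in>B. tg g \<in> sc ` K} \<union> {g\<in>B. sc g \<in> sc ` K} \<subseteq> K1"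
          using B image_compactin[OF K csc] unfolding BG2_def by blast
        obtain K2 where K2: "compactin TG K2" "{g\<in>B. tg g \<in> tg ` K} \<union> {g\<in>B. sc g \<in> tg ` K} \<subseteq> K2"
          using B image_compactin[OF K ctg] unfolding BG2_def by blast
        have "setmul tg sc mul K B \<subseteq> setmul tg sc mul K K1"
          using K1(2) unfolding setmul_def by force
        moreover have "setmul tg sc mul B K \<subseteq> setmul tg sc mul K2 K"
          using K2(2) unfolding setmul_def by force
        moreover have "compactin TG (setmul tg sc mul K K1 \<union> setmul tg sc mul K2 K)"
          by (rule compactin_Un[OF sm[OF K K1(1)] sm[OF K2(1) K]])
        ultimately show "\<exists>K'. compactin TG K' \<and> setmul tg sc mul K B \<union> setmul tg sc mul B K \<subseteq> K'"
          by blast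
      qed
    qed
  qed
  have cpt: "K \<in> BG" if K: "compactin TG K" for K
  proof (rule BGI)
    show "K \<subseteq> topspace TG" using K compactin_subset_topspace by blast
    fix K0 assume K0: "compactin TG K0"
    have "compactin TG (setmul tg sc mul K0 K \<union> setmul tg sc mul K K0)"
      by (rule compactin_Un[OF sm[OF K0 K] sm[OF K K0]])
    then show "\<exists>K'. compactin TG K' \<and> setmul tg sc mul K0 K \<union> setmul tg sc mul K K0 \<subseteq> K'"
      by blast
  qed
  have born: "bornology (topspace TG) BG"
    unfolding bornology_def
  proof (intro conjI ballI allI impI)
    show "BG \<subseteq> Pow (topspace TG)" using BGs by blast
  next
    fix B C assume B: "B \<in> BG" and C: "C \<subseteq> B"
    show "C \<in> BG"
    proof (rule BGI)
      show "C \<subseteq> topspace TG" using BGs[OF B] C by blast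
      fix K assume "compactin TG K"
      then obtain K' where "compactin TG K'" "setmul tg sc mul K B \<union> setmul tg sc mul B K \<subseteq> K'"
        using BGE[OF B] by blast
      moreover have "setmul tg sc mul K C \<subseteq> setmul tg sc mul K B" "setmul tg sc mul C K \<subseteq> setmul tg sc mul B K"
        using C setmul_mono by blast+
      ultimately show "\<exists>K'. compactin TG K' \<and> setmul tg sc mul K C \<union> setmul tg sc mul C K \<subseteq> K'"
        by blast
    qed
  next
    show "{} \<in> BG" by (rule cpt) simp
  next
    fix B C assume B: "B \<in> BG" and C: "C \<in> BG"
    show "B \<union> C \<in> BG"
    proof (rule BGI)
      show "B \<union> C \<subseteq> topspace TG" using BGs[OF B] BGs[OF C] by blast
      fix K assume K: "compactin TG K"
      obtain K1 where K1: "compactin TG K1" "setmul tg sc mul K B \<union> setmul tg sc mul B K \<subseteq> K1"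
        using BGE[OF B K] by blast
      obtain K2 where K2: "compactin TG K2" "setmul tg sc mul K C \<union> setmul tg sc mul C K \<subseteq> K2"
        using BGE[OF C K] by blast
      have "setmul tg sc mul K (B \<union> C) \<union> setmul tg sc mul (B \<union> C) K \<subseteq> K1 \<union> K2"
        using K1(2) K2(2) unfolding setmul_def by blast
      then show "\<exists>K'. compactin TG K' \<and> setmul tg sc mul K (B \<union> C) \<union> setmul tg sc mul (B \<union> C) K \<subseteq> K'"
        using compactin_Un[OF K1(1) K2(1)] by blast
    qed
  next
    show "\<Union> BG = topspace TG"
    proof
      show "\<Union> BG \<subseteq> topspace TG" using BGs by blast
      show "topspace TG \<subseteq> \<Union> BG"
      proof
        fix g assume "g \<in> topspace TG"
        then have "{g} \<in> BG" by (intro cpt) simp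
        then show "g \<in> \<Union> BG" by blast
      qed
    qed
  qed
  have comp: "compatible_bornology tg sc iv mul BG"
    unfolding compatible_bornology_def
  proof (intro conjI ballI)
    fix B assume B: "B \<in> BG"
    then have B2: "B \<in> BG2" using eq by simp
    have Bt: "B \<subseteq> topspace TG" using BGs[OF B] .
    have "iv ` B \<in> BG2" unfolding BG2_def
    proof (intro CollectI conjI allI impI)
      show "iv ` B \<subseteq> topspace TG" using Bt T by auto
      fix K assume K: "compactin TM K"
      obtain K' where K': "compactin TG K'" "{g\<in>B. tg g \<in> K} \<union> {g\<in>B. sc g \<in> K} \<subseteq> K'"
        using B2 K unfolding BG2_def by blast
      have "{g\<in>iv ` B. tg g \<in> K} \<union> {g\<in>iv ` B. sc g \<in> K} \<subseteq> iv ` K'"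
      proof
        fix g assume "g \<in> {g\<in>iv ` B. tg g \<in> K} \<union> {g\<in>iv ` B. sc g \<in> K}"
        then obtain b where b: "b \<in> B" "g = iv b" "tg (iv b) \<in> K \<or> sc (iv b) \<in> K" by blast
        then have "sc b \<in> K \<or> tg b \<in> K" using T Bt by auto
        then have "b \<in> K'" using K'(2) b by blast
        then show "g \<in> iv ` K'" using b by blast
      qed
      then show "\<exists>K'. compactin TG K' \<and> {g\<in>iv ` B. tg g \<in> K} \<union> {g\<in>iv ` B. sc g \<in> K} \<subseteq> K'"
        using image_compactin[OF K'(1) civ] by blast
    qed
    then show "iv ` B \<in> BG" using eq by simp
  next
    fix B C assume B: "B \<in> BG" and C: "C \<in> BG"
    have Bt: "B \<subseteq> topspace TG" using BGs[OF B] .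
    have Ct: "C \<subseteq> topspace TG" using BGs[OF C] .
    show "setmul tg sc mul B C \<in> BG"
    proof (rule BGI)
      show "setmul tg sc mul B C \<subseteq> topspace TG"
        using Bt Ct G unfolding setmul_def topological_groupoid_def by blast
      fix K assume K: "compactin TG K"
      have Kt: "K \<subseteq> topspace TG" using K compactin_subset_topspace by blast
      obtain K1 where K1: "compactin TG K1" "setmul tg sc mul K B \<union> setmul tg sc mul B K \<subseteq> K1"
        using BGE[OF B K] by blast
      obtain K2 where K2: "compactin TG K2" "setmul tg sc mul K1 C \<union> setmul tg sc mul C K1 \<subseteq> K2"
        using BGE[OF C K1(1)] by blast
      obtain K3 where K3: "compactin TG K3" "setmul tg sc mul K C \<union> setmul tg sc mul C K \<subseteq> K3"
        using BGE[OF C K] by blast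
      obtain K4 where K4: "compactin TG K4" "setmul tg sc mul K3 B \<union> setmul tg sc mul B K3 \<subseteq> K4"
        using BGE[OF B K3(1)] by blast
      have "setmul tg sc mul K (setmul tg sc mul B C) \<subseteq> setmul tg sc mul (setmul tg sc mul K B) C"
        by (rule setmul_assoc1[OF G Kt Bt Ct])
      also have "\<dots> \<subseteq> setmul tg sc mul K1 C" by (rule setmul_mono) (use K1(2) in auto)
      finally have 1: "setmul tg sc mul K (setmul tg sc mul B C) \<subseteq> K2" using K2(2) by blast
      have "setmul tg sc mul (setmul tg sc mul B C) K \<subseteq> setmul tg sc mul B (setmul tg sc mul C K)"
        by (rule setmul_assoc2[OF G Bt Ct Kt])
      also have "\<dots> \<subseteq> setmul tg sc mul B K3" by (rule setmul_mono) (use K3(2) in auto)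
      finally have 2: "setmul tg sc mul (setmul tg sc mul B C) K \<subseteq> K4" using K4(2) by blast
      show "\<exists>K'. compactin TG K' \<and> setmul tg sc mul K (setmul tg sc mul B C) \<union> setmul tg sc mul (setmul tg sc mul B C) K \<subseteq> K'"
        using 1 2 compactin_Un[OF K2(1) K4(1)] by blast
    qed
  qed
  have "un ` topspace TM \<in> BG2" unfolding BG2_def
  proof (intro CollectI conjI allI impI)
    show "un ` topspace TM \<subseteq> topspace TG" using T by auto
    fix K assume K: "compactin TM K"
    have "{g\<in>un ` topspace TM. tg g \<in> K} \<union> {g\<in>un ` topspace TM. sc g \<in> K} \<subseteq> un ` K"
      using T by force
    then show "\<exists>K'. compactin TG K' \<and> {g\<in>un ` topspace TM. tg g \<in> K} \<union> {g\<in>un ` topspace TM. sc g \<in> K} \<subseteq> K'"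
      using image_compactin[OF K cun] by blast
  qed
  then have bb: "base_bounded (topspace TM) un BG"
    unfolding base_bounded_def using eq by simp
  show ?thesis using eq born comp bb cpt unfolding BG2_def by blast
qed

end
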